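(* Let $G$ be a group with identity $e$, $A$ a set with at least two elements, and $\tau: A^G\to A^G$ a lazy cellular automaton with minimal neighborhood $S \subseteq G$, unique active transition $p \in A^S$ and writing symbol $a \in A \setminus \{p(e)\}$. For $b \in A$ let $S_b := \{s\in S : p(s) = b\}$. Assume at least one of the following holds: \begin{enumerate} \item $S_a = \emptyset$; \item $S_a^{-1}\subseteq S_b^{-1}S_a$ for some $b\in A\setminus\{a\}$; \item $S_a^{-1}\subseteq S_{b_1}^{-1}S_{b_2}$ for some $b_1, b_2\in A\setminus\{a\}$ with $b_1\neq b_2$. \end{enumerate} Then $\tau$ is idempotent, i.e., $\tau^2 = \tau$.
   Context: $A^G$ is the set of maps $G \to A$ with shift action $(g\cdot x)(h) := x(hg)$. A cellular automaton is a map $\tau : A^G \to A^G$ with a finite $S \subseteq G$ (a neighborhood) and $\mu : A^S \to A$ such that $\tau(x)(g) = \mu((g\cdot x)|_S)$; the minimal neighborhood is the unique neighborhood of smallest cardinality. $\tau$ is lazy with unique active transition $p \in A^S$ if there is a local defining map $\mu : A^S \to A$ with $e \in S$ such that for all $z \in A^S$: $\mu(z) = z(e)$ iff $z \neq p$; its writing symbol is $a:=\mu(p)$. For $S, K \subseteq G$, $SK := \{sk : s\in S, k \in K\}$ and $S^{-1} := \{s^{-1} : s\in S\}$. *)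

theory Defs
  imports "HOL-Library.FuncSet"
begin

text \<open>The group G is a type of class group_add (not necessarily abelian), written
additively: identity 0, product g + h, inverse - g.  Configurations are maps G => A.\<close>

definition shift :: "'g::group_add \<Rightarrow> ('g \<Rightarrow> 'a) \<Rightarrow> ('g \<Rightarrow> 'a)" where
  "shift g x = (\<lambda>h. x (h + g))"

text \<open>mu is a local defining map for tau over S (patterns in A^S are extensional
functions on S, obtained by restrict).\<close>
definition local_rule :: "(('g::group_add \<Rightarrow> 'a) \<Rightarrow> ('g \<Rightarrow> 'a)) \<Rightarrow> 'g set \<Rightarrow> (('g \<Rightarrow> 'a) \<Rightarrow> 'a) \<Rightarrow> bool" where
  "local_rule \<tau> S \<mu> \<longleftrightarrow> (\<forall>x g. \<tau> x g = \<mu> (restrict (shift g x) S))"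

definition neighborhood :: "(('g::group_add \<Rightarrow> 'a) \<Rightarrow> ('g \<Rightarrow> 'a)) \<Rightarrow> 'g set \<Rightarrow> bool" where
  "neighborhood \<tau> S \<longleftrightarrow> finite S \<and> (\<exists>\<mu>. local_rule \<tau> S \<mu>)"

definition cellular_automaton :: "(('g::group_add \<Rightarrow> 'a) \<Rightarrow> ('g \<Rightarrow> 'a)) \<Rightarrow> bool" where
  "cellular_automaton \<tau> \<longleftrightarrow> (\<exists>S. neighborhood \<tau> S)"

definition minimal_neighborhood :: "(('g::group_add \<Rightarrow> 'a) \<Rightarrow> ('g \<Rightarrow> 'a)) \<Rightarrow> 'g set \<Rightarrow> bool" where
  "minimal_neighborhood \<tau> S \<longleftrightarrow> neighborhood \<tau> S \<and> (\<forall>S'. neighborhood \<tau> S' \<longrightarrow> card S \<le> card S')"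

definition level_set :: "'g set \<Rightarrow> ('g \<Rightarrow> 'a) \<Rightarrow> 'a \<Rightarrow> 'g set" where
  "level_set S p b = {s \<in> S. p s = b}"

definition set_inv :: "'g::group_add set \<Rightarrow> 'g set" where
  "set_inv K = uminus ` K"

definition set_prod :: "'g::group_add set \<Rightarrow> 'g set \<Rightarrow> 'g set" where
  "set_prod K L = {k + l | k l. k \<in> K \<and> l \<in> L}"

end

theory Submission
  imports Defs
begin

theorem corollary3:
  fixes \<tau> :: "('g::group_add \<Rightarrow> 'a) \<Rightarrow> ('g \<Rightarrow> 'a)"
    and S :: "'g set" and p :: "'g \<Rightarrow> 'a" and \<mu> :: "('g \<Rightarrow> 'a) \<Rightarrow> 'a" and a :: 'a
  assumes two: "\<exists>x y :: 'a. x \<noteq> y"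
    and ca: "cellular_automaton \<tau>"
    and minS: "minimal_neighborhood \<tau> S"
    and e_in: "0 \<in> S"
    and mu: "local_rule \<tau> S \<mu>"
    and p: "p \<in> S \<rightarrow>\<^sub>E UNIV"
    and lazy: "\<forall>z \<in> S \<rightarrow>\<^sub>E UNIV. (\<mu> z = z 0 \<longleftrightarrow> z \<noteq> p)"
    and a_def: "a = \<mu> p"
    and a_ne: "a \<noteq> p 0"
    and cond: "level_set S p a = {}
      \<or> (\<exists>b. b \<noteq> a \<and> set_inv (level_set S p a) \<subseteq> set_prod (set_inv (level_set S p b)) (level_set S p a))
      \<or> (\<exists>b1 b2. b1 \<noteq> a \<and> b2 \<noteq> a \<and> b1 \<noteq> b2 \<and>
            set_inv (level_set S p a) \<subseteq> set_prod (set_inv (level_set S p b1)) (level_set S p b2))"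
  shows "\<tau> \<circ> \<tau> = \<tau>"
proof -
  define M where "M x g \<longleftrightarrow> (\<forall>s\<in>S. x (s + g) = p s)" for x g
  have eqp: "restrict (shift g x) S = p \<longleftrightarrow> M x g" for x g
  proof
    assume "restrict (shift g x) S = p"
    then have "restrict (shift g x) S s = p s" for s by simp
    then show "M x g" unfolding M_def by (metis restrict_apply shift_def)
  next
    assume "M x g"
    then show "restrict (shift g x) S = p" using p
      by (auto simp: M_def shift_def fun_eq_iff PiE_def extensional_def)
  qed
  have step: "\<tau> x g = (if M x g then a else x g)" for x g
  proof -
    have z: "restrict (shift g x) S \<in> S \<rightarrow>\<^sub>E UNIV" by simp
    have "\<tau> x g = \<mu> (restrict (shift g x) S)" using mu by (simp add: local_rule_def)
    then show ?thesis using lazy[rule_format, OF z] eqp[of g x] e_in a_def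
      by (auto simp: shift_def)
  qed
  have key: "\<not> M (\<tau> x) g" for x g
  proof
    assume m: "M (\<tau> x) g"
    have nm: "\<not> M x g"
    proof
      assume "M x g"
      then have "\<tau> x g = a" using step by simp
      moreover have "\<tau> x (0 + g) = p 0" using m e_in M_def by blast
      ultimately show False using a_ne by simp
    qed
    have alt: "x (t + g) = p t \<or> (p t = a \<and> M x (t + g))" if "t \<in> S" for t
      proof -
      have "\<tau> x (t + g) = p t" using m that unfolding M_def by blast
      then show ?thesis using step[of x "t+g"] by (cases "M x (t + g)") auto
    qed
    obtain s where s: "s \<in> S" "x (s + g) \<noteq> p s" using nm M_def by blast
    with alt have sa: "p s = a" and ms: "M x (s + g)" by blast+
    have sA: "s \<in> level_set S p a" using s sa by (simp add: level_set_def)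
    have shift_eq: "x (t + g) = p u" if "u \<in> S" "-s = -t + u" for t u
    proof -
      have h0: "t + -s = t + (-t + u)" by (simp only: that(2))
      have h1: "t + -s = u" unfolding h0 by (simp add: add.assoc[symmetric])
      have "u + s = t" unfolding h1[symmetric] by (simp add: add.assoc)
      then have "u + (s + g) = t + g" by (simp add: add.assoc[symmetric])
      moreover have "x (u + (s + g)) = p u" using ms that(1) unfolding M_def by blast
      ultimately show ?thesis by simp
    qed
    have bad: "p t \<noteq> a \<Longrightarrow> t \<in> S \<Longrightarrow> x (t + g) = p t" for t using alt by blast
    from cond show False
    proof (elim disjE exE conjE)
      assume "level_set S p a = {}" then show False using sA by blast
    next
      fix b assume b: "b \<noteq> a" and inc: "set_inv (level_set S p a)
          \<subseteq> set_prod (set_inv (level_set S p b)) (level_set S p a)"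
      have "-s \<in> set_inv (level_set S p a)" using sA by (simp add: set_inv_def)
      with inc obtain t u where tu: "-s = -t + u" "t \<in> S" "p t = b" "u \<in> S" "p u = a"
        by (auto simp: set_prod_def set_inv_def level_set_def)
      have "x (t + g) = a" using shift_eq tu by simp
      moreover have "x (t + g) = b" using bad tu b by simp
      ultimately show False using b by simp
    next
      fix b1 b2 assume b: "b1 \<noteq> a" "b2 \<noteq> a" "b1 \<noteq> b2" and inc: "set_inv (level_set S p a)
          \<subseteq> set_prod (set_inv (level_set S p b1)) (level_set S p b2)"
      have "-s \<in> set_inv (level_set S p a)" using sA by (simp add: set_inv_def)
      with inc obtain t u where tu: "-s = -t + u" "t \<in> S" "p t = b1" "u \<in> S" "p u = b2"
        by (auto simp: set_prod_def set_inv_def level_set_def)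
      have "x (t + g) = b2" using shift_eq tu by simp
      moreover have "x (t + g) = b1" using bad tu b by simp
      ultimately show False using b by simp
    qed
  qed
  show ?thesis
  proof
    fix x show "(\<tau> \<circ> \<tau>) x = \<tau> x" using key step by (auto simp: fun_eq_iff)
  qed
qed

end
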